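(* Let $G=(V,E)$ be a nontrivial graph of order $n$ with $\tau(G)=\tau>\frac{n}{2}$, and suppose its $\tau$-set $W$ satisfies $G[W]\cong K_\tau$. Then: (a) if $G$ contains a $W$-distinguishing vertex, then $\beta_p(G)=\tau+1$; (b) if the induced subgraph $G[N(W)\setminus W]$ has an isolated vertex, then $\beta_p(G)=\tau+1$; (c) if $|N(W)\setminus W|=1$, then $\beta_p(G)=\tau+1$; (d) if $G[N(W)\setminus W]$ contains a universal vertex $v$ (adjacent to all other vertices of $N(W)\setminus W$), then $v$ is adjacent to at least one vertex of $V\setminus N[W]$.
   Context: All graphs are finite, simple, undirected and connected. $N(W)=\bigcup_{v\in W}N(v)$, $N[W]=N(W)\cup W$. Two vertices $u,v$ are twins if $N(u)\setminus\{v\}=N(v)\setminus\{u\}$; the twin number $\tau(G)$ is the maximum cardinality of an equivalence class of the twin relation; a $\tau$-set is a set of pairwise twin vertices of cardinality $\tau(G)$. Given a $\tau$-set $W$ with $G[W]$ complete, a vertex $v\in V\setminus W$ is $W$-distinguishing if $d(v,z)\ne d(v,W)$ for every $z\in N(W)\setminus W$, where $d(v,W)=\min_{w\in W}d(v,w)$. For a partition $\Pi=\{S_1,\dots,S_k\}$ of $V$, $r(u|\Pi)=(d(u,S_1),\dots,d(u,S_k))$; $\Pi$ is locating if $r(u|\Pi)\ne r(v|\Pi)$ for all distinct $u,v$; $\beta_p(G)$ is the minimum size of a locating partition. *)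

theory Defs
  imports Main
begin

definition walk :: "'a set \<Rightarrow> ('a \<Rightarrow> 'a \<Rightarrow> bool) \<Rightarrow> 'a list \<Rightarrow> bool" where
  "walk V E xs \<longleftrightarrow> xs \<noteq> [] \<and> set xs \<subseteq> V \<and>
     (\<forall>i. Suc i < length xs \<longrightarrow> E (xs ! i) (xs ! Suc i))"

definition connected_graph :: "'a set \<Rightarrow> ('a \<Rightarrow> 'a \<Rightarrow> bool) \<Rightarrow> bool" where
  "connected_graph V E \<longleftrightarrow> finite V \<and> V \<noteq> {} \<and>
     (\<forall>u v. E u v \<longrightarrow> u \<in> V \<and> v \<in> V) \<and>
     (\<forall>u v. E u v \<longrightarrow> E v u) \<and> (\<forall>u. \<not> E u u) \<and>
     (\<forall>u\<in>V. \<forall>v\<in>V. \<exists>xs. walk V E xs \<and> hd xs = u \<and> last xs = v)"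

definition gdist :: "'a set \<Rightarrow> ('a \<Rightarrow> 'a \<Rightarrow> bool) \<Rightarrow> 'a \<Rightarrow> 'a \<Rightarrow> nat" where
  "gdist V E u v = (LEAST k. \<exists>xs. walk V E xs \<and> hd xs = u \<and> last xs = v \<and> length xs = Suc k)"

definition setdist :: "'a set \<Rightarrow> ('a \<Rightarrow> 'a \<Rightarrow> bool) \<Rightarrow> 'a \<Rightarrow> 'a set \<Rightarrow> nat" where
  "setdist V E u S = Min (gdist V E u ` S)"

definition nbhd :: "'a set \<Rightarrow> ('a \<Rightarrow> 'a \<Rightarrow> bool) \<Rightarrow> 'a \<Rightarrow> 'a set" where
  "nbhd V E v = {x \<in> V. E v x}"

definition nbhd_set :: "'a set \<Rightarrow> ('a \<Rightarrow> 'a \<Rightarrow> bool) \<Rightarrow> 'a set \<Rightarrow> 'a set" where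
  "nbhd_set V E W = (\<Union>v\<in>W. nbhd V E v)"

definition closed_nbhd_set :: "'a set \<Rightarrow> ('a \<Rightarrow> 'a \<Rightarrow> bool) \<Rightarrow> 'a set \<Rightarrow> 'a set" where
  "closed_nbhd_set V E W = nbhd_set V E W \<union> W"

definition twins :: "'a set \<Rightarrow> ('a \<Rightarrow> 'a \<Rightarrow> bool) \<Rightarrow> 'a \<Rightarrow> 'a \<Rightarrow> bool" where
  "twins V E u v \<longleftrightarrow> nbhd V E u - {v} = nbhd V E v - {u}"

definition twin_class :: "'a set \<Rightarrow> ('a \<Rightarrow> 'a \<Rightarrow> bool) \<Rightarrow> 'a \<Rightarrow> 'a set" where
  "twin_class V E u = {v \<in> V. twins V E u v}"

definition twin_number :: "'a set \<Rightarrow> ('a \<Rightarrow> 'a \<Rightarrow> bool) \<Rightarrow> nat" where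
  "twin_number V E = Max ((\<lambda>u. card (twin_class V E u)) ` V)"

definition tau_set :: "'a set \<Rightarrow> ('a \<Rightarrow> 'a \<Rightarrow> bool) \<Rightarrow> 'a set \<Rightarrow> bool" where
  "tau_set V E W \<longleftrightarrow> W \<subseteq> V \<and> (\<forall>u\<in>W. \<forall>v\<in>W. twins V E u v) \<and>
     card W = twin_number V E"

definition is_complete_on :: "('a \<Rightarrow> 'a \<Rightarrow> bool) \<Rightarrow> 'a set \<Rightarrow> bool" where
  "is_complete_on E W \<longleftrightarrow> (\<forall>u\<in>W. \<forall>v\<in>W. u \<noteq> v \<longrightarrow> E u v)"

definition W_distinguishing :: "'a set \<Rightarrow> ('a \<Rightarrow> 'a \<Rightarrow> bool) \<Rightarrow> 'a set \<Rightarrow> 'a \<Rightarrow> bool" where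
  "W_distinguishing V E W v \<longleftrightarrow> v \<in> V - W \<and>
     (\<forall>z\<in>nbhd_set V E W - W. gdist V E v z \<noteq> setdist V E v W)"

definition is_partition :: "'a set \<Rightarrow> 'a set set \<Rightarrow> bool" where
  "is_partition V P \<longleftrightarrow> \<Union>P = V \<and> {} \<notin> P \<and>
     (\<forall>S\<in>P. \<forall>T\<in>P. S \<noteq> T \<longrightarrow> S \<inter> T = {})"

text \<open>Locating: the distance vectors r(u|P) and r(v|P) differ, i.e. some class
  has different distance from u and from v.\<close>
definition locating_partition :: "'a set \<Rightarrow> ('a \<Rightarrow> 'a \<Rightarrow> bool) \<Rightarrow> 'a set set \<Rightarrow> bool" where
  "locating_partition V E P \<longleftrightarrow> is_partition V P \<and>
     (\<forall>u\<in>V. \<forall>v\<in>V. u \<noteq> v \<longrightarrow> (\<exists>S\<in>P. setdist V E u S \<noteq> setdist V E v S))"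

definition partition_dimension :: "'a set \<Rightarrow> ('a \<Rightarrow> 'a \<Rightarrow> bool) \<Rightarrow> nat" where
  "partition_dimension V E = (LEAST k. \<exists>P. locating_partition V E P \<and> card P = k)"

end

theory Submission
  imports Defs
begin


lemma walk_snoc:
  assumes "ys \<noteq> []"
  shows "walk V E (ys @ [a]) \<longleftrightarrow> walk V E ys \<and> a \<in> V \<and> E (last ys) a"
proof
  assume w: "walk V E (ys @ [a])"
  have "walk V E ys" unfolding walk_def
  proof (intro conjI allI impI)
    show "ys \<noteq> []" by fact
    show "set ys \<subseteq> V" using w by (auto simp: walk_def)
    fix i assume "Suc i < length ys"
    then have "Suc i < length (ys @ [a])" by simp
    then have "E ((ys @ [a]) ! i) ((ys @ [a]) ! Suc i)" using w by (simp add: walk_def)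
    then show "E (ys ! i) (ys ! Suc i)" using \<open>Suc i < length ys\<close> by (simp add: nth_append)
  qed
  moreover have "a \<in> V" using w by (auto simp: walk_def)
  moreover have "E (last ys) a"
  proof -
    have "Suc (length ys - 1) < length (ys @ [a])" using assms by simp
    then have "E ((ys @ [a]) ! (length ys - 1)) ((ys @ [a]) ! Suc (length ys - 1))"
      using w by (auto simp: walk_def)
    then show ?thesis using assms by (simp add: nth_append last_conv_nth)
  qed
  ultimately show "walk V E ys \<and> a \<in> V \<and> E (last ys) a" by blast
next
  assume h: "walk V E ys \<and> a \<in> V \<and> E (last ys) a"
  show "walk V E (ys @ [a])" unfolding walk_def
  proof (intro conjI allI impI)
    show "ys @ [a] \<noteq> []" by simp
    show "set (ys @ [a]) \<subseteq> V" using h by (auto simp: walk_def)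
    fix i assume i: "Suc i < length (ys @ [a])"
    show "E ((ys @ [a]) ! i) ((ys @ [a]) ! Suc i)"
    proof (cases "Suc i < length ys")
      case True then show ?thesis using h by (simp add: nth_append walk_def)
    next
      case False
      then have "i = length ys - 1" using i by simp
      then show ?thesis using h assms False i by (simp add: nth_append last_conv_nth)
    qed
  qed
qed

lemma walk_rev:
  assumes "\<forall>u v. E u v \<longrightarrow> E v u" "walk V E xs"
  shows "walk V E (rev xs)"
  unfolding walk_def
proof (intro conjI allI impI)
  show "rev xs \<noteq> []" "set (rev xs) \<subseteq> V" using assms(2) by (auto simp: walk_def)
  fix i assume i: "Suc i < length (rev xs)"
  have "E (xs ! (length xs - Suc (Suc i))) (xs ! Suc (length xs - Suc (Suc i)))"
    using assms(2) i by (simp add: walk_def)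
  moreover have "Suc (length xs - Suc (Suc i)) = length xs - Suc i" using i by simp
  ultimately show "E (rev xs ! i) (rev xs ! Suc i)" using i assms(1)
    by (simp add: rev_nth)
qed

lemma walk_cross:
  assumes "walk V E xs" "hd xs \<notin> W" "last xs \<in> W"
  shows "\<exists>a b. E a b \<and> a \<in> V - W \<and> b \<in> W"
  using assms
proof (induction xs rule: rev_induct)
  case Nil then show ?case by (simp add: walk_def)
next
  case (snoc x xs)
  show ?case
  proof (cases "xs = []")
    case True then show ?thesis using snoc by simp
  next
    case False
    then have w: "walk V E xs" "E (last xs) x" using snoc walk_snoc by fastforce+
    show ?thesis
    proof (cases "last xs \<in> W")
      case True then show ?thesis using snoc.IH w snoc.prems False by simp
    next
      case nW: False
      have "last xs \<in> V" using w False by (auto simp: walk_def)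
      then show ?thesis using nW w snoc.prems by auto
    qed
  qed
qed



locale cg =
  fixes V :: "'a set" and E :: "'a \<Rightarrow> 'a \<Rightarrow> bool"
  assumes cg: "connected_graph V E"
begin

lemma fin: "finite V" and EV: "E u v \<Longrightarrow> u \<in> V \<and> v \<in> V"
  and sym: "E u v \<Longrightarrow> E v u" and irr: "\<not> E u u"
  and conn: "u \<in> V \<Longrightarrow> v \<in> V \<Longrightarrow> \<exists>xs. walk V E xs \<and> hd xs = u \<and> last xs = v"
  using cg unfolding connected_graph_def by blast+

lemma gdist_le:
  assumes "walk V E xs" "hd xs = u" "last xs = v"
  shows "gdist V E u v \<le> length xs - 1"
proof -
  have "length xs = Suc (length xs - 1)" using assms(1) by (cases xs) (auto simp: walk_def)
  then show ?thesis unfolding gdist_def using assms by (intro Least_le) blast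
qed

lemma gdist_ex:
  assumes "u \<in> V" "v \<in> V"
  shows "\<exists>xs. walk V E xs \<and> hd xs = u \<and> last xs = v \<and> length xs = Suc (gdist V E u v)"
proof -
  obtain xs where xs: "walk V E xs" "hd xs = u" "last xs = v" using conn assms by blast
  have "length xs = Suc (length xs - 1)" using xs(1) by (cases xs) (auto simp: walk_def)
  then have "\<exists>k xs. walk V E xs \<and> hd xs = u \<and> last xs = v \<and> length xs = Suc k" using xs by blast
  then show ?thesis unfolding gdist_def by (rule LeastI_ex)
qed

lemma gdist_refl: "u \<in> V \<Longrightarrow> gdist V E u u = 0"
  using gdist_le[of "[u]" u u] by (simp add: walk_def)

lemma gdist_0: "u \<in> V \<Longrightarrow> v \<in> V \<Longrightarrow> gdist V E u v = 0 \<longleftrightarrow> u = v"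
proof
  assume "u \<in> V" "v \<in> V" "gdist V E u v = 0"
  then obtain xs where "walk V E xs" "hd xs = u" "last xs = v" "length xs = 1"
    using gdist_ex by fastforce
  then show "u = v" by (cases xs) auto
qed (simp add: gdist_refl)

lemma gdist_sym: assumes "u \<in> V" "v \<in> V" shows "gdist V E u v = gdist V E v u"
proof -
  have *: "gdist V E b a \<le> gdist V E a b" if ha: "a \<in> V" and hb: "b \<in> V" for a b
  proof -
    obtain xs where xs: "walk V E xs" "hd xs = a" "last xs = b" "length xs = Suc (gdist V E a b)"
      using gdist_ex[OF ha hb] by blast
    have "walk V E (rev xs)" using walk_rev[OF _ xs(1)] sym by blast
    moreover have "hd (rev xs) = b" "last (rev xs) = a" using xs
      by (auto simp: walk_def hd_rev last_rev)
    ultimately show ?thesis using gdist_le[of "rev xs" b a] xs by simp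
  qed
  show ?thesis using *[OF assms] *[OF assms(2,1)] by simp
qed

lemma gdist_edge: assumes "E u v" shows "gdist V E u v = 1"
proof -
  have "walk V E [u, v]" using assms EV[OF assms] by (auto simp: walk_def less_Suc_eq)
  then have "gdist V E u v \<le> 1" using gdist_le[of "[u,v]" u v] by simp
  moreover have "u \<noteq> v" using irr assms by blast
  ultimately show ?thesis using gdist_0 EV[OF assms] by fastforce
qed

lemma gdist_1: assumes "u \<in> V" "v \<in> V" "gdist V E u v = 1" shows "E u v"
proof -
  obtain xs where xs: "walk V E xs" "hd xs = u" "last xs = v" "length xs = 2"
    using gdist_ex[OF assms(1,2)] assms(3) by auto
  then obtain a b where "xs = [a, b]"
    by (metis One_nat_def Suc_1 length_0_conv length_Suc_conv)
  then show ?thesis using xs by (auto simp: walk_def)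
qed

lemma gdist_step: assumes "x \<in> V" "E a b" shows "gdist V E x b \<le> gdist V E x a + 1"
proof -
  obtain xs where xs: "walk V E xs" "hd xs = x" "last xs = a" "length xs = Suc (gdist V E x a)"
    using gdist_ex assms EV by blast
  have ne: "xs \<noteq> []" using xs by auto
  have "walk V E (xs @ [b])" using walk_snoc[OF ne] xs assms EV by blast
  then show ?thesis using gdist_le[of "xs @ [b]" x b] xs ne by simp
qed

lemma gdist_twin:
  assumes "twins V E a b" "a \<in> V" "b \<in> V" "x \<in> V" "x \<noteq> a" "x \<noteq> b"
  shows "gdist V E x b \<le> gdist V E x a"
proof -
  obtain xs where xs: "walk V E xs" "hd xs = x" "last xs = a" "length xs = Suc (gdist V E x a)"
    using gdist_ex assms by blast
  have "gdist V E x a \<noteq> 0" using gdist_0 assms by auto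
  then have "length xs \<noteq> 1" using xs by simp
  moreover have "xs \<noteq> []" using xs by auto
  ultimately have "butlast xs \<noteq> []" by (cases xs) auto
  moreover have "xs = butlast xs @ [a]" using xs(3) \<open>xs \<noteq> []\<close> append_butlast_last_id by metis
  ultimately obtain ys where ys: "xs = ys @ [a]" "ys \<noteq> []" by blast
  have wy: "walk V E ys" "E (last ys) a" using walk_snoc[OF ys(2)] xs ys by auto
  have hy: "hd ys = x" using xs ys by simp
  have gy: "gdist V E x (last ys) \<le> length ys - 1" using gdist_le[OF wy(1) hy] by simp
  have ly: "length xs = length ys + 1" using ys by simp
  show ?thesis
  proof (cases "last ys = b")
    case True then show ?thesis using gy xs ly by simp
  next
    case False
    have "last ys \<in> nbhd V E a - {b}" using wy EV sym False by (auto simp: nbhd_def)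
    then have "last ys \<in> nbhd V E b" using assms(1) by (auto simp: twins_def)
    then have "E (last ys) b" using sym by (auto simp: nbhd_def)
    then have "gdist V E x b \<le> gdist V E x (last ys) + 1" using gdist_step assms by blast
    then show ?thesis using gy xs ly ys(2) by (cases ys) auto
  qed
qed

lemma setdist_0:
  assumes "a \<in> V" "S \<subseteq> V" "S \<noteq> {}"
  shows "setdist V E a S = 0 \<longleftrightarrow> a \<in> S"
proof
  have fS: "finite S" using fin assms finite_subset by blast
  assume "setdist V E a S = 0"
  then have "0 \<in> gdist V E a ` S" unfolding setdist_def using Min_in[of "gdist V E a ` S"] fS assms by auto
  then obtain s where "s \<in> S" "gdist V E a s = 0" by auto
  then show "a \<in> S" using gdist_0 assms by auto
next
  have fS: "finite S" using fin assms finite_subset by blast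
  assume "a \<in> S"
  then show "setdist V E a S = 0" unfolding setdist_def
    using Min_le[of "gdist V E a ` S" 0] gdist_refl assms fS by force
qed

lemma setdist_single: "setdist V E a {b} = gdist V E a b"
  by (simp add: setdist_def)

lemma setdist_1:
  assumes "a \<in> V" "S \<subseteq> V" "a \<notin> S" "b \<in> S" "E a b"
  shows "setdist V E a S = 1"
proof -
  have fS: "finite S" using fin assms finite_subset by blast
  have "1 \<in> gdist V E a ` S" using assms gdist_edge by force
  then have "Min (gdist V E a ` S) \<le> 1" using Min_le[of "gdist V E a ` S" 1] fS by blast
  moreover have "Min (gdist V E a ` S) \<noteq> 0"
  proof
    assume "Min (gdist V E a ` S) = 0"
    then have "setdist V E a S = 0" by (simp add: setdist_def)
    then show False using setdist_0 assms by blast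
  qed
  ultimately show ?thesis unfolding setdist_def by simp
qed

end


context cg
begin

lemma adjall:
  assumes tw: "\<forall>u\<in>W. \<forall>v\<in>W. twins V E u v"
    and "x \<in> V - W" "w1 \<in> W" "E w1 x" "w \<in> W"
  shows "E w x"
proof -
  have "x \<in> nbhd V E w1 - {w}" using assms by (auto simp: nbhd_def)
  then have "x \<in> nbhd V E w" using tw assms by (auto simp: twins_def)
  then show ?thesis by (simp add: nbhd_def)
qed

lemma twin_eq:
  assumes "twins V E a b" "a \<in> V" "b \<in> V" "x \<in> V" "x \<noteq> a" "x \<noteq> b"
  shows "gdist V E x b = gdist V E x a"
proof -
  have "twins V E b a" using assms(1) by (auto simp: twins_def)
  then show ?thesis using gdist_twin[OF assms] gdist_twin[of b a x] assms by fastforce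
qed

lemma finP: assumes "is_partition V P" shows "finite P"
proof -
  have "P \<subseteq> Pow V" using assms by (auto simp: is_partition_def)
  moreover have "finite (Pow V)" using fin by simp
  ultimately show ?thesis by (rule finite_subset)
qed

lemma lower:
  assumes WV: "W \<subseteq> V" and tw: "\<forall>u\<in>W. \<forall>v\<in>W. twins V E u v"
    and comp: "is_complete_on E W"
    and x: "x \<in> V - W" and w0: "w0 \<in> W" "E w0 x"
    and loc: "locating_partition V E P"
  shows "card W + 1 \<le> card P"
proof -
  have part: "is_partition V P" using loc by (simp add: locating_partition_def)
  have fP: "finite P" using finP part .
  have SV: "S \<subseteq> V" "S \<noteq> {}" if "S \<in> P" for S using part that by (auto simp: is_partition_def)
  have ex1: "\<exists>!S. S \<in> P \<and> a \<in> S" if "a \<in> V" for a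
    using part that unfolding is_partition_def by blast
  define c where "c a = (THE S. S \<in> P \<and> a \<in> S)" for a
  have c: "c a \<in> P \<and> a \<in> c a" if "a \<in> V" for a
    using theI'[OF ex1[OF that]] unfolding c_def by blast
  have cu: "c a = S" if "S \<in> P" "a \<in> S" for a S
    using the1_equality[OF ex1] that SV unfolding c_def by blast
  have locP: "\<exists>S\<in>P. setdist V E a S \<noteq> setdist V E b S" if "a \<in> V" "b \<in> V" "a \<noteq> b" for a b
    using loc that by (auto simp: locating_partition_def)
  have injc: "inj_on c W"
  proof
    fix w w' assume ww: "w \<in> W" "w' \<in> W" "c w = c w'"
    show "w = w'"
    proof (rule ccontr)
      assume ne: "w \<noteq> w'"
      obtain S where S: "S \<in> P" "setdist V E w S \<noteq> setdist V E w' S"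
        using locP[of w w'] ww WV ne by blast
      show False
      proof (cases "w \<in> S")
        case True
        have "w' \<in> c w'" using c ww(2) WV by blast
        then have "w' \<in> S" using cu[OF S(1) True] ww(3) by simp
        then show False using S True setdist_0 SV ww WV by (metis subsetD)
      next
        case False
        then have F': "w' \<notin> S" using cu[OF S(1)] c ww WV by (metis subsetD)
        have "gdist V E w ` S = gdist V E w' ` S"
        proof (rule image_cong[OF refl])
          fix s assume s: "s \<in> S"
          then have sV: "s \<in> V" "s \<noteq> w" "s \<noteq> w'" using SV S False F' by auto
          have "gdist V E s w' = gdist V E s w"
            using twin_eq[of w w' s] tw ww WV sV by blast
          then show "gdist V E w s = gdist V E w' s" using gdist_sym sV ww WV by (metis subsetD)
        qed
        then show False using S by (simp add: setdist_def)
      qed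
    qed
  qed
  have cW: "c ` W \<subseteq> P" using c WV by auto
  have fW: "finite W" using finite_subset[OF WV fin] .
  have le: "card W \<le> card P" using card_image[OF injc] card_mono[OF fP cW] by simp
  show ?thesis
  proof (rule ccontr)
    assume "\<not> ?thesis"
    then have "card (c ` W) = card P" using le card_image[OF injc] by simp
    then have eq: "c ` W = P" using card_subset_eq[OF fP cW] by simp
    have xV: "x \<in> V" using x by simp
    then obtain w where w: "w \<in> W" "c x = c w" using c eq by (metis imageE)
    have xw: "x \<noteq> w" using x w by auto
    obtain S where S: "S \<in> P" "setdist V E x S \<noteq> setdist V E w S"
      using locP[OF xV _ xw] w WV by blast
    obtain w' where w': "w' \<in> W" "S = c w'" using S eq by blast
    have w'S: "w' \<in> S" using w' c WV by blast
    show False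
    proof (cases "x \<in> S")
      case True
      then have "w \<in> S" using cu[OF S(1) True] w c WV by (metis subsetD)
      then show False using S True setdist_0 SV w WV xV by (metis subsetD)
    next
      case False
      then have wS: "w \<notin> S" using cu[OF S(1)] w c xV by metis
      then have ww': "w \<noteq> w'" using w'S by auto
      have "E w' x" using adjall[OF tw x w0 w'(1)] .
      then have e1: "setdist V E x S = 1" using setdist_1[OF xV SV(1)[OF S(1)] False w'S] sym by blast
      have "E w w'" using comp w w' ww' by (simp add: is_complete_on_def)
      then have "setdist V E w S = 1" using setdist_1[OF _ SV(1)[OF S(1)] wS w'S] w WV by blast
      then show False using e1 S by simp
    qed
  qed
qed

end


context cg
begin

lemma setdist_W:
  assumes WV: "W \<subseteq> V" and tw: "\<forall>u\<in>W. \<forall>v\<in>W. twins V E u v"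
    and v: "v \<in> V - W" and w: "w \<in> W"
  shows "setdist V E v W = gdist V E v w"
proof -
  have "gdist V E v ` W = {gdist V E v w}"
  proof -
    have eq: "gdist V E v w' = gdist V E v w" if w': "w' \<in> W" for w'
    proof -
      have "twins V E w w'" using tw w w' by blast
      moreover have "w \<in> V" "w' \<in> V" using w w' WV by auto
      moreover have "v \<in> V" "v \<noteq> w" "v \<noteq> w'" using v w w' by auto
      ultimately show ?thesis using twin_eq[of w w' v] by blast
    qed
    have "gdist V E v ` W = (\<lambda>_. gdist V E v w) ` W" by (rule image_cong[OF refl]) (rule eq)
    then show ?thesis using w by auto
  qed
  then show ?thesis by (simp add: setdist_def)
qed

lemma upper:
  assumes WV: "W \<subseteq> V" and tw: "\<forall>u\<in>W. \<forall>v\<in>W. twins V E u v"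
    and comp: "is_complete_on E W"
    and vd: "W_distinguishing V E W v"
    and big: "card V < 2 * card W"
  shows "\<exists>P. locating_partition V E P \<and> card P = card W + 1"
proof -
  have v: "v \<in> V - W" using vd by (simp add: W_distinguishing_def)
  define R where "R = V - W - {v}"
  have fW: "finite W" using finite_subset[OF WV fin] .
  have fR: "finite R" using fin by (simp add: R_def)
  have "card V = card W + card (V - W)" using card_Diff_subset[OF fW WV] card_mono[OF fin WV] by simp
  moreover have "card (V - W) > 0" using v fin by (auto simp: card_gt_0_iff)
  then have "card (V - W) = card R + 1" unfolding R_def using v fin
    by (simp add: card_Diff_singleton_if)
  ultimately have cR: "card R < card W" using big by simp
  obtain f where f: "f ` R \<subseteq> W" "inj_on f R" using card_le_inj[OF fR fW] cR by auto
  have "card (f ` R) < card W" using card_image[OF f(2)] cR by simp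
  then have "\<not> W \<subseteq> f ` R" using card_mono[OF finite_imageI[OF fR]] by fastforce
  then obtain ws where ws: "ws \<in> W" "ws \<notin> f ` R" by blast
  define g where "g w = (if w \<in> f ` R then {w, the_inv_into R f w} else {w})" for w
  have RW: "R \<inter> W = {}" "v \<notin> R" "v \<notin> W" "R \<subseteq> V" using v by (auto simp: R_def)
  have gmem: "y \<in> g w \<longleftrightarrow> y = w \<or> (y \<in> R \<and> f y = w)" if "w \<in> W" for w y
  proof
    assume "y \<in> g w"
    then show "y = w \<or> (y \<in> R \<and> f y = w)"
      unfolding g_def using f_the_inv_into_f[OF f(2)] the_inv_into_into[OF f(2)]
      by (auto split: if_splits)
  next
    assume "y = w \<or> (y \<in> R \<and> f y = w)"
    then show "y \<in> g w" unfolding g_def using the_inv_into_f_f[OF f(2)] by (auto dest: inj_onD[OF f(2)])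
  qed
  have gV: "g w \<subseteq> V" if "w \<in> W" for w using gmem[OF that] that WV RW by auto
  define P where "P = insert {v} (g ` W)"
  have injg: "inj_on g W"
  proof
    fix w w' assume "w \<in> W" "w' \<in> W" "g w = g w'"
    then have "w' \<in> g w" using gmem by auto
    then show "w = w'" using gmem \<open>w \<in> W\<close> \<open>w' \<in> W\<close> RW by auto
  qed
  have vg: "{v} \<notin> g ` W"
  proof
    assume "{v} \<in> g ` W"
    then obtain w where "w \<in> W" "{v} = g w" by auto
    then show False using gmem[of w w] RW by auto
  qed
  have cardP: "card P = card W + 1" unfolding P_def using vg card_image[OF injg] fW by simp
  have part: "is_partition V P"
    unfolding is_partition_def
  proof (intro conjI ballI impI)
    show "\<Union> P = V"
    proof
      show "\<Union> P \<subseteq> V" unfolding P_def using gV v by auto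
      show "V \<subseteq> \<Union> P"
      proof
        fix a assume a: "a \<in> V"
        show "a \<in> \<Union> P"
        proof (cases "a = v")
          case True then show ?thesis by (simp add: P_def)
        next
          case False
          show ?thesis
          proof (cases "a \<in> W")
            case True then show ?thesis using gmem[OF True, of a] unfolding P_def by blast
          next
            case nW: False
            then have "a \<in> R" using a False by (simp add: R_def)
            then show ?thesis using gmem[of "f a" a] f unfolding P_def by blast
          qed
        qed
      qed
    qed
    show "{} \<notin> P" unfolding P_def using gmem by auto
    fix S T assume ST: "S \<in> P" "T \<in> P" "S \<noteq> T"
    show "S \<inter> T = {}"
    proof (cases "S = {v}")
      case True
      then obtain w where "T = g w" "w \<in> W" using ST P_def by auto
      then show ?thesis using True gmem RW by auto
    next
      case False
      then obtain w where w: "S = g w" "w \<in> W" using ST P_def by auto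
      show ?thesis
      proof (cases "T = {v}")
        case True then show ?thesis using w gmem RW by auto
      next
        case False
        then obtain w' where w': "T = g w'" "w' \<in> W" using ST P_def by auto
        then have "w \<noteq> w'" using w ST by auto
        then show ?thesis using w w' gmem RW by fastforce
      qed
    qed
  qed
  have SV: "S \<subseteq> V" "S \<noteq> {}" if "S \<in> P" for S using part that by (auto simp: is_partition_def)
  have sep: "\<exists>S\<in>P. setdist V E a S \<noteq> setdist V E b S"
    if "S \<in> P" "a \<in> S" "b \<notin> S" "a \<in> V" "b \<in> V" for S a b
    using that setdist_0[OF _ SV[OF that(1)]] by metis
  have pair: "\<exists>S\<in>P. setdist V E (f x) S \<noteq> setdist V E x S" if x: "x \<in> R" for x
  proof -
    have fx: "f x \<in> W" "f x \<in> V" using f x WV by auto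
    have xV: "x \<in> V" "x \<notin> W" "x \<noteq> v" using x RW by auto
    show ?thesis
    proof (cases "\<exists>w1\<in>W. E w1 x")
      case True
      then have xU: "x \<in> nbhd_set V E W - W" using xV by (auto simp: nbhd_set_def nbhd_def)
      have "gdist V E v x \<noteq> setdist V E v W" using vd xU by (simp add: W_distinguishing_def)
      moreover have "setdist V E v W = gdist V E v (f x)" using setdist_W[OF WV tw v fx(1)] .
      ultimately have "gdist V E (f x) v \<noteq> gdist V E x v"
        using gdist_sym xV fx v by auto
      then show ?thesis unfolding P_def by (auto simp: setdist_single)
    next
      case False
      have gws: "g ws = {ws}" using gmem[OF ws(1)] ws(2) by auto
      have ne: "f x \<noteq> ws" using ws x by auto
      have "E (f x) ws" using comp fx ws ne by (simp add: is_complete_on_def)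
      then have "gdist V E (f x) ws = 1" by (rule gdist_edge)
      moreover have "gdist V E x ws \<noteq> 1"
      proof
        assume "gdist V E x ws = 1"
        then have "E x ws" using gdist_1 xV ws WV by blast
        then show False using False ws sym by blast
      qed
      ultimately have "setdist V E (f x) (g ws) \<noteq> setdist V E x (g ws)"
        by (simp add: gws setdist_single)
      then show ?thesis unfolding P_def using ws by blast
    qed
  qed
  have loc: "\<exists>S\<in>P. setdist V E a S \<noteq> setdist V E b S"
    if ab: "a \<in> V" "b \<in> V" "a \<noteq> b" for a b
  proof -
    have vP: "{v} \<in> P" by (simp add: P_def)
    have gP: "g w \<in> P" if "w \<in> W" for w using that by (simp add: P_def)
    show ?thesis
    proof (cases "a = v \<or> b = v")
      case True
      then show ?thesis
      proof
        assume "a = v" then show ?thesis using sep[OF vP _ _ ab(1,2)] ab by auto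
      next
        assume "b = v"
        then obtain S where "S \<in> P" "setdist V E b S \<noteq> setdist V E a S"
          using sep[OF vP _ _ ab(2,1)] ab by auto
        then show ?thesis by metis
      qed
    next
      case False
      then have aWR: "a \<in> W \<or> a \<in> R" using ab by (auto simp: R_def)
      show ?thesis
      proof (cases "a \<in> W")
        case True
        show ?thesis
        proof (cases "b \<in> g a")
          case False then show ?thesis using sep[OF gP[OF True] _ False ab(1,2)] gmem[OF True] by blast
        next
          case bin: True
          then have "b \<in> R" "f b = a" using gmem[OF True] ab by auto
          then obtain S where "S \<in> P" "setdist V E a S \<noteq> setdist V E b S" using pair by blast
          then show ?thesis by blast
        qed
      next
        case nW: False
        then have aR: "a \<in> R" using aWR by simp
        have faW: "f a \<in> W" using f aR by auto
        show ?thesis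
        proof (cases "b \<in> g (f a)")
          case False then show ?thesis using sep[OF gP[OF faW] _ False ab(1,2)] gmem[OF faW] aR by blast
        next
          case bin: True
          then have "b = f a" using gmem[OF faW] ab f(2) aR by (auto dest: inj_onD)
          then obtain S where "S \<in> P" "setdist V E b S \<noteq> setdist V E a S" using pair aR by blast
          then show ?thesis by metis
        qed
      qed
    qed
  qed
  have "locating_partition V E P" unfolding locating_partition_def using part loc by blast
  then show ?thesis using cardP by blast
qed

end


theorem lemma24:
  fixes V :: "'a set" and E :: "'a \<Rightarrow> 'a \<Rightarrow> bool" and W :: "'a set"
  assumes "connected_graph V E"
    and "card V \<ge> 2"
    and "2 * twin_number V E > card V"
    and "tau_set V E W"
    and "is_complete_on E W"
  shows "((\<exists>v. W_distinguishing V E W v) \<longrightarrow> partition_dimension V E = twin_number V E + 1)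
    \<and> ((\<exists>x\<in>nbhd_set V E W - W. \<forall>y\<in>nbhd_set V E W - W. \<not> E x y)
         \<longrightarrow> partition_dimension V E = twin_number V E + 1)
    \<and> (card (nbhd_set V E W - W) = 1 \<longrightarrow> partition_dimension V E = twin_number V E + 1)
    \<and> (\<forall>v\<in>nbhd_set V E W - W. (\<forall>y\<in>nbhd_set V E W - W. y \<noteq> v \<longrightarrow> E v y)
         \<longrightarrow> (\<exists>u\<in>V - closed_nbhd_set V E W. E v u))"
proof -
  interpret cg V E by unfold_locales (rule assms(1))
  have WV: "W \<subseteq> V" and tw: "\<forall>u\<in>W. \<forall>v\<in>W. twins V E u v"
    and cW: "card W = twin_number V E" using assms(4) by (auto simp: tau_set_def)
  have comp: "is_complete_on E W" by fact
  have big: "card V < 2 * card W" using assms(3) cW by simp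
  have fW: "finite W" using finite_subset[OF WV fin] .
  have Wne: "W \<noteq> {}"
  proof
    assume "W = {}"
    then have "card W = 0" by simp
    then show False using big by simp
  qed
  let ?U = "nbhd_set V E W - W"
  have Umem: "x \<in> ?U \<longleftrightarrow> x \<in> V - W \<and> (\<exists>w\<in>W. E w x)" for x
    by (auto simp: nbhd_set_def nbhd_def)
  have A: "partition_dimension V E = twin_number V E + 1" if vd: "W_distinguishing V E W v" for v
  proof -
    have v: "v \<in> V - W" using vd by (simp add: W_distinguishing_def)
    obtain w where w: "w \<in> W" using Wne by blast
    have vV: "v \<in> V" "v \<notin> W" using v by auto
    have wV: "w \<in> V" using w WV by auto
    obtain xs where xs: "walk V E xs" "hd xs = v" "last xs = w" using conn[OF vV(1) wV] by blast
    have "hd xs \<notin> W" "last xs \<in> W" using xs vV w by auto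
    then obtain a b where ab: "E a b" "a \<in> V - W" "b \<in> W" using walk_cross[OF xs(1)] by blast
    have low: "card W + 1 \<le> card P" if "locating_partition V E P" for P
      using lower[OF WV tw comp ab(2) ab(3) sym[OF ab(1)] that] .
    obtain P where P: "locating_partition V E P" "card P = card W + 1"
      using upper[OF WV tw comp vd big] by blast
    have "partition_dimension V E = card W + 1"
      unfolding partition_dimension_def
    proof (rule Least_equality)
      show "\<exists>P. locating_partition V E P \<and> card P = card W + 1" using P by blast
    next
      fix k assume "\<exists>P. locating_partition V E P \<and> card P = k"
      then show "card W + 1 \<le> k" using low by blast
    qed
    then show ?thesis using cW by simp
  qed
  have B: "partition_dimension V E = twin_number V E + 1"
    if xU: "x \<in> ?U" and iso: "\<forall>y\<in>?U. \<not> E x y" for x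
  proof -
    have "x \<in> V - W \<and> (\<exists>w\<in>W. E w x)" using xU Umem by blast
    then obtain w0 where x: "x \<in> V - W" "w0 \<in> W" "E w0 x" by blast
    have "setdist V E x W = 1"
      using setdist_1[OF _ WV _ x(2) sym[OF x(3)]] x by blast
    moreover have "gdist V E x z \<noteq> 1" if zU: "z \<in> ?U" for z
    proof
      assume g1: "gdist V E x z = 1"
      have "z \<in> V" using zU by (auto simp: nbhd_set_def nbhd_def)
      then have "E x z" using gdist_1[OF _ _ g1] x by blast
      then show False using iso zU by blast
    qed
    ultimately have "W_distinguishing V E W x" using x by (auto simp: W_distinguishing_def)
    then show ?thesis using A by blast
  qed
  have C: "partition_dimension V E = twin_number V E + 1" if c1: "card ?U = 1"
  proof -
    obtain x where "?U = {x}" using card_1_singletonE[OF c1] by blast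
    then show ?thesis using B[of x] irr by auto
  qed
  have D: "\<exists>u\<in>V - closed_nbhd_set V E W. E v u"
    if v: "v \<in> ?U" and univ: "\<forall>y\<in>?U. y \<noteq> v \<longrightarrow> E v y" for v
  proof (rule ccontr)
    assume no: "\<not> ?thesis"
    obtain w0 where v0: "v \<in> V - W" "w0 \<in> W" "E w0 v" using v Umem by blast
    have adjv: "E w v" if "w \<in> W" for w using adjall[OF tw v0 that] .
    have "twins V E w0 v"
      unfolding twins_def
    proof
      show "nbhd V E w0 - {v} \<subseteq> nbhd V E v - {w0}"
      proof
        fix y assume y: "y \<in> nbhd V E w0 - {v}"
        then have yV: "y \<in> V" "E w0 y" "y \<noteq> v" by (auto simp: nbhd_def)
        have "E v y"
        proof (cases "y \<in> W")
          case True then show ?thesis using adjv sym by blast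
        next
          case False
          then have "y \<in> ?U" using Umem yV v0 by blast
          then show ?thesis using univ yV by blast
        qed
        moreover have "y \<noteq> w0" using yV irr by blast
        ultimately show "y \<in> nbhd V E v - {w0}" using yV by (simp add: nbhd_def)
      qed
    next
      show "nbhd V E v - {w0} \<subseteq> nbhd V E w0 - {v}"
      proof
        fix y assume y: "y \<in> nbhd V E v - {w0}"
        then have yV: "y \<in> V" "E v y" "y \<noteq> w0" by (auto simp: nbhd_def)
        have "y \<in> closed_nbhd_set V E W" using no yV by blast
        then have "E w0 y"
        proof (cases "y \<in> W")
          case True then show ?thesis using comp v0 yV by (simp add: is_complete_on_def)
        next
          case False
          with \<open>y \<in> closed_nbhd_set V E W\<close> have "y \<in> ?U"
            by (simp add: closed_nbhd_set_def)
          then obtain w1 where "w1 \<in> W" "E w1 y" using Umem by blast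
          then show ?thesis using adjall[OF tw _ _ _ v0(2)] yV False by blast
        qed
        moreover have "y \<noteq> v" using yV irr by blast
        ultimately show "y \<in> nbhd V E w0 - {v}" using yV by (simp add: nbhd_def)
      qed
    qed
    then have "insert v W \<subseteq> twin_class V E w0"
      using tw v0 WV by (auto simp: twin_class_def)
    moreover have "finite (twin_class V E w0)" using fin by (simp add: twin_class_def)
    ultimately have "card (insert v W) \<le> card (twin_class V E w0)" by (rule card_mono[rotated])
    moreover have "card (twin_class V E w0) \<le> twin_number V E"
      unfolding twin_number_def using fin v0 WV by (intro Max_ge) auto
    ultimately show False using v0 fW cW by simp
  qed
  show ?thesis using A B C D by blast
qed


end
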